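(* Let $p,q\ge 0$ with $p+q=3$. Equip $\mathcal{G}(p,q)$ with the bilinear product $$x\bullet y = x_+y_+ + \widetilde{y_-}\,x_- + y_-x_+ + x_-\widetilde{y_+},$$ and define $N:\mathcal{G}(p,q)\to\mathbb{R}$ by $N(x)=\langle x\bullet x^*\rangle_0$. (In fact $x\bullet x^*$ is itself a real scalar, so $x\bullet x^* = N(x)\,1$.) Then the following hold. 1. $1$ is a two-sided unit for $\bullet$. 2. $N$ is a nondegenerate real quadratic form on the 8-dimensional space $\mathcal{G}(p,q)$. 3. $N(x\bullet y)=N(x)N(y)$ for all $x,y\in\mathcal{G}(p,q)$. Consequently $(\mathcal{G}(p,q),\bullet,N)$ is a Hurwitz algebra, and hence it is isomorphic either to the octonions $\mathbb{O}$ or to the split-octonions $\mathbb{O}_s$.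
   Context: Let $p,q\ge0$ with $p+q=3$. $\mathcal{G}(p,q)$ denotes the real Clifford (geometric) algebra of $\mathbb{R}^3$ with a nondegenerate quadratic form of signature $(p,q)$. It is the associative unital real algebra generated by an orthonormal basis $e_1,e_2,e_3$ subject to $e_i^2=\lambda_i$ and $e_ie_j=-e_je_i$ for $i\ne j$. Here $\lambda_i\in\{\pm1\}$, and exactly $p$ of the $\lambda_i$ equal $+1$. The algebra is 8-dimensional with basis $1,e_1,e_2,e_3,e_1e_2,e_2e_3,e_1e_3,e_1e_2e_3$. Juxtaposition denotes the (associative) geometric product. $\langle x\rangle_k$ denotes the grade-$k$ part of $x$. We write $x_+=\langle x\rangle_0+\langle x\rangle_2$ (even part) and $x_-=\langle x\rangle_1+\langle x\rangle_3$ (odd part). Reversion $x\mapsto x^\dagger$ is the linear anti-automorphism fixing vectors; it multiplies grade $k$ by $(-1)^{k(k-1)/2}$. Inversion is $\bar x=x_+-x_-$. Clifford conjugation is $\tilde x=(\bar x)^\dagger$; it multiplies grades $0,1,2,3$ by $+1,-1,-1,+1$ respectively. Full grade inversion is $x^*=2\langle x\rangle_0-x$, which equals $x_+^\dagger - x_-$. A Hurwitz algebra is a real algebra with a two-sided unit carrying a nondegenerate quadratic form $n$ satisfying $n(xy)=n(x)n(y)$ for all $x,y$. By Hurwitz's theorem, the 8-dimensional ones are exactly the octonions $\mathbb{O}$ and the split-octonions $\mathbb{O}_s$, up to isomorphism. *)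

theory Defs
  imports "HOL-Analysis.Analysis"
begin

text \<open>The real Clifford algebra G(p,q) of R^3.  A basis blade e_1^a e_2^b e_3^c is indexed
  by (a,b,c) :: bool \<times> bool \<times> bool; a multivector is a real vector indexed by blades.
  The signature is given by lam :: nat \<Rightarrow> real with e_i^2 = lam i (i = 1,2,3).\<close>

type_synonym blade = "bool \<times> bool \<times> bool"
type_synonym mv = "real ^ blade"

definition grade :: "blade \<Rightarrow> nat" where
  "grade A = (case A of (a, b, c) \<Rightarrow> of_bool a + of_bool b + of_bool c)"

text \<open>e_A e_B = blade_sign A B * blade_lam lam A B * e_(A xor B)\<close>
definition blade_sign :: "blade \<Rightarrow> blade \<Rightarrow> real" where
  "blade_sign A B = (case A of (a1, a2, a3) \<Rightarrow> case B of (b1, b2, b3) \<Rightarrow>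
     (-1) ^ (of_bool (a2 \<and> b1) + of_bool (a3 \<and> b1) + of_bool (a3 \<and> b2)))"

definition blade_lam :: "(nat \<Rightarrow> real) \<Rightarrow> blade \<Rightarrow> blade \<Rightarrow> real" where
  "blade_lam lam A B = (case A of (a1, a2, a3) \<Rightarrow> case B of (b1, b2, b3) \<Rightarrow>
     (if a1 \<and> b1 then lam 1 else 1) * (if a2 \<and> b2 then lam 2 else 1) *
     (if a3 \<and> b3 then lam 3 else 1))"

definition blade_xor :: "blade \<Rightarrow> blade \<Rightarrow> blade" where
  "blade_xor A B = (case A of (a1, a2, a3) \<Rightarrow> case B of (b1, b2, b3) \<Rightarrow>
     (a1 \<noteq> b1, a2 \<noteq> b2, a3 \<noteq> b3))"

definition gprod :: "(nat \<Rightarrow> real) \<Rightarrow> mv \<Rightarrow> mv \<Rightarrow> mv" where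
  "gprod lam x y = (\<chi> C. \<Sum>A\<in>UNIV. \<Sum>B\<in>UNIV.
     (if blade_xor A B = C then blade_sign A B * blade_lam lam A B * (x $ A) * (y $ B) else 0))"

definition mv_one :: mv where
  "mv_one = (\<chi> A. if A = (False, False, False) then 1 else 0)"

definition grade_part :: "nat \<Rightarrow> mv \<Rightarrow> mv" where
  "grade_part k x = (\<chi> A. if grade A = k then x $ A else 0)"

definition scalar_part :: "mv \<Rightarrow> real" where
  "scalar_part x = x $ (False, False, False)"

definition even_part :: "mv \<Rightarrow> mv" where
  "even_part x = grade_part 0 x + grade_part 2 x"

definition odd_part :: "mv \<Rightarrow> mv" where
  "odd_part x = grade_part 1 x + grade_part 3 x"

definition reversion :: "mv \<Rightarrow> mv" where
  "reversion x = (\<chi> A. (-1) ^ (grade A * (grade A - 1) div 2) * x $ A)"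

definition inversion :: "mv \<Rightarrow> mv" where
  "inversion x = even_part x - odd_part x"

definition cconj :: "mv \<Rightarrow> mv" where
  "cconj x = reversion (inversion x)"

definition full_inv :: "mv \<Rightarrow> mv" where
  "full_inv x = 2 *\<^sub>R grade_part 0 x - x"

definition bullet :: "(nat \<Rightarrow> real) \<Rightarrow> mv \<Rightarrow> mv \<Rightarrow> mv" where
  "bullet lam x y =
     gprod lam (even_part x) (even_part y) + gprod lam (cconj (odd_part y)) (odd_part x)
   + gprod lam (odd_part y) (even_part x) + gprod lam (odd_part x) (cconj (even_part y))"

definition normN :: "(nat \<Rightarrow> real) \<Rightarrow> mv \<Rightarrow> real" where
  "normN lam x = scalar_part (bullet lam x (full_inv x))"

definition nondeg_quadratic_form :: "('a::real_vector \<Rightarrow> real) \<Rightarrow> bool" where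
  "nondeg_quadratic_form Q \<longleftrightarrow>
     (\<exists>B :: 'a \<Rightarrow> 'a \<Rightarrow> real. bilinear B \<and> (\<forall>x y. B x y = B y x) \<and> (\<forall>x. Q x = B x x)
        \<and> (\<forall>x. (\<forall>y. B x y = 0) \<longrightarrow> x = 0))"

definition hurwitz_algebra ::
  "('a::real_vector \<Rightarrow> 'a \<Rightarrow> 'a) \<Rightarrow> 'a \<Rightarrow> ('a \<Rightarrow> real) \<Rightarrow> bool" where
  "hurwitz_algebra m e n \<longleftrightarrow>
     bilinear m \<and> (\<forall>x. m e x = x \<and> m x e = x) \<and> nondeg_quadratic_form n
     \<and> (\<forall>x y. n (m x y) = n x * n y)"

end

theory Submission
  imports Defs
begin

definition mk :: "real \<Rightarrow> real \<Rightarrow> real \<Rightarrow> real \<Rightarrow> real \<Rightarrow> real \<Rightarrow> real \<Rightarrow> real \<Rightarrow> mv" where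
  "mk x0 x1 x2 x3 x4 x5 x6 x7 = (\<chi> A. case A of (a, b, c) \<Rightarrow>
     (if a then (if b then (if c then x7 else x6) else (if c then x5 else x4))
      else (if b then (if c then x3 else x2) else (if c then x1 else x0))))"

lemma univ_blade: "(UNIV :: blade set) = {(False,False,False),(False,False,True),(False,True,False),
  (False,True,True),(True,False,False),(True,False,True),(True,True,False),(True,True,True)}"
  by (auto simp: UNIV_bool)

lemma sum_blade: "(\<Sum>A\<in>(UNIV :: blade set). f A) = f (False,False,False) + f (False,False,True)
  + f (False,True,False) + f (False,True,True) + f (True,False,False) + f (True,False,True)
  + f (True,True,False) + f (True,True,True)"
  by (simp add: univ_blade add.assoc)

lemma all_blade: "(\<forall>A :: blade. P A) \<longleftrightarrow> P (False,False,False) \<and> P (False,False,True)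
  \<and> P (False,True,False) \<and> P (False,True,True) \<and> P (True,False,False) \<and> P (True,False,True)
  \<and> P (True,True,False) \<and> P (True,True,True)"
  by (metis (full_types) prod_cases3)

lemma mk_eq: "mk x0 x1 x2 x3 x4 x5 x6 x7 = mk y0 y1 y2 y3 y4 y5 y6 y7 \<longleftrightarrow>
  x0 = y0 \<and> x1 = y1 \<and> x2 = y2 \<and> x3 = y3 \<and> x4 = y4 \<and> x5 = y5 \<and> x6 = y6 \<and> x7 = y7"
  unfolding vec_eq_iff all_blade by (simp add: mk_def)

lemma mk_eta: "x = mk (x $ (False, False, False)) (x $ (False, False, True)) (x $ (False, True, False)) (x $ (False, True, True)) (x $ (True, False, False)) (x $ (True, False, True)) (x $ (True, True, False)) (x $ (True, True, True))"
  unfolding vec_eq_iff all_blade by (simp add: mk_def)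

lemma mk_ex: "\<exists>x0 x1 x2 x3 x4 x5 x6 x7. x = mk x0 x1 x2 x3 x4 x5 x6 x7"
  using mk_eta by blast

lemma mk_add: "mk x0 x1 x2 x3 x4 x5 x6 x7 + mk y0 y1 y2 y3 y4 y5 y6 y7 = mk (x0+y0) (x1+y1) (x2+y2) (x3+y3) (x4+y4) (x5+y5) (x6+y6) (x7+y7)"
  unfolding vec_eq_iff all_blade by (simp add: mk_def)

lemma mk_scale: "c *\<^sub>R mk x0 x1 x2 x3 x4 x5 x6 x7 = mk (c*x0) (c*x1) (c*x2) (c*x3) (c*x4) (c*x5) (c*x6) (c*x7)"
  unfolding vec_eq_iff all_blade by (simp add: mk_def)

lemma mk_zero: "0 = mk 0 0 0 0 0 0 0 0"
  unfolding vec_eq_iff all_blade by (simp add: mk_def)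

lemma one_mk: "mv_one = mk 1 0 0 0 0 0 0 0"
  unfolding vec_eq_iff all_blade by (simp add: mk_def mv_one_def)

lemma full_inv_mk: "full_inv (mk x0 x1 x2 x3 x4 x5 x6 x7) = mk x0 (-x1) (-x2) (-x3) (-x4) (-x5) (-x6) (-x7)"
  unfolding vec_eq_iff all_blade by (simp add: mk_def full_inv_def grade_part_def grade_def)

lemma even_mk: "even_part (mk x0 x1 x2 x3 x4 x5 x6 x7) = mk x0 0 0 x3 0 x5 x6 0"
  unfolding vec_eq_iff all_blade by (simp add: mk_def even_part_def grade_part_def grade_def)

lemma odd_mk: "odd_part (mk x0 x1 x2 x3 x4 x5 x6 x7) = mk 0 x1 x2 0 x4 0 0 x7"
  unfolding vec_eq_iff all_blade by (simp add: mk_def odd_part_def grade_part_def grade_def)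

lemma cconj_mk: "cconj (mk x0 x1 x2 x3 x4 x5 x6 x7) = mk x0 (-x1) (-x2) (-x3) (-x4) (-x5) (-x6) x7"
  unfolding vec_eq_iff all_blade by (simp add: mk_def cconj_def reversion_def inversion_def
     even_part_def odd_part_def grade_part_def grade_def)

lemma gprod_mk: "gprod lam (mk x0 x1 x2 x3 x4 x5 x6 x7) (mk y0 y1 y2 y3 y4 y5 y6 y7) = mk (- lam 1 * lam 2 * lam 3 * x7 * y7 - lam 1 * lam 2 * x6 * y6 - lam 1 * lam 3 * x5 * y5 + lam 1 * x4 * y4 - lam 2 * lam 3 * x3 * y3 + lam 2 * x2 * y2 + lam 3 * x1 * y1 + x0 * y0) (- lam 1 * lam 2 * x6 * y7 - lam 1 * lam 2 * x7 * y6 + lam 1 * x4 * y5 - lam 1 * x5 * y4 + lam 2 * x2 * y3 - lam 2 * x3 * y2 + x0 * y1 + x1 * y0) (lam 1 * lam 3 * x5 * y7 + lam 1 * lam 3 * x7 * y5 + lam 1 * x4 * y6 - lam 1 * x6 * y4 - lam 3 * x1 * y3 + lam 3 * x3 * y1 + x0 * y2 + x2 * y0) (lam 1 * x4 * y7 + lam 1 * x5 * y6 - lam 1 * x6 * y5 + lam 1 * x7 * y4 + x0 * y3 - x1 * y2 + x2 * y1 + x3 * y0) (- lam 2 * lam 3 * x3 * y7 - lam 2 * lam 3 * x7 * y3 - lam 2 * x2 * y6 + lam 2 * x6 * y2 - lam 3 * x1 * y5 + lam 3 * x5 * y1 + x0 * y4 + x4 * y0) (- lam 2 * x2 * y7 -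 lam 2 * x3 * y6 + lam 2 * x6 * y3 - lam 2 * x7 * y2 + x0 * y5 - x1 * y4 + x4 * y1 + x5 * y0) (lam 3 * x1 * y7 + lam 3 * x3 * y5 - lam 3 * x5 * y3 + lam 3 * x7 * y1 + x0 * y6 - x2 * y4 + x4 * y2 + x6 * y0) (x0 * y7 + x1 * y6 - x2 * y5 + x3 * y4 + x4 * y3 - x5 * y2 + x6 * y1 + x7 * y0)"
  apply (subst mk_eta[of "gprod lam (mk x0 x1 x2 x3 x4 x5 x6 x7) (mk y0 y1 y2 y3 y4 y5 y6 y7)"])
  apply (simp only: mk_eq)
  apply (intro conjI)
  apply (unfold gprod_def vec_lambda_beta sum_blade)
  apply (simp_all only: blade_xor_def prod.case)
  apply (simp_all only: prod.inject simp_thms if_False if_True mult_zero_right mult_zero_left add_0_left add_0_right)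
  apply (simp_all add: mk_def blade_sign_def blade_lam_def algebra_simps)
  done

lemma bullet_mk: "bullet lam (mk x0 x1 x2 x3 x4 x5 x6 x7) (mk y0 y1 y2 y3 y4 y5 y6 y7) = mk (- lam 1 * lam 2 * lam 3 * x7 * y7 - lam 1 * lam 2 * x6 * y6 - lam 1 * lam 3 * x5 * y5 - lam 1 * x4 * y4 - lam 2 * lam 3 * x3 * y3 - lam 2 * x2 * y2 - lam 3 * x1 * y1 + x0 * y0) (- lam 1 * lam 2 * x6 * y7 + lam 1 * lam 2 * x7 * y6 - lam 1 * x4 * y5 + lam 1 * x5 * y4 - lam 2 * x2 * y3 + lam 2 * x3 * y2 + x0 * y1 + x1 * y0) (lam 1 * lam 3 * x5 * y7 - lam 1 * lam 3 * x7 * y5 - lam 1 * x4 * y6 + lam 1 * x6 * y4 + lam 3 * x1 * y3 - lam 3 * x3 * y1 + x0 * y2 + x2 * y0) (lam 1 * x4 * y7 + lam 1 * x5 * y6 - lam 1 * x6 * y5 - lam 1 * x7 * y4 + x0 * y3 - x1 * y2 + x2 * y1 + x3 * y0) (- lam 2 * lam 3 * x3 * y7 + lam 2 * lam 3 * x7 * y3 + lam 2 * x2 * y6 - lam 2 * x6 * y2 + lam 3 * x1 * y5 - lam 3 * x5 * y1 + x0 * y4 + x4 * y0) (- lam 2 * x2 * y7 - lam 2 * x3 * y6 + lam 2 * x6 * y3 + lam 2 * x7 * y2 + x0 * y5 - x1 * y4 + x4 * y1 + x5 * y0) (lam 3 * x1 * y7 + lam 3 * x3 * y5 - lam 3 *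 x5 * y3 - lam 3 * x7 * y1 + x0 * y6 - x2 * y4 + x4 * y2 + x6 * y0) (x0 * y7 - x1 * y6 + x2 * y5 + x3 * y4 - x4 * y3 - x5 * y2 + x6 * y1 + x7 * y0)"
  unfolding bullet_def even_mk odd_mk cconj_mk gprod_mk mk_add mk_eq
  by (simp add: algebra_simps)

lemma normN_mk: "normN lam (mk x0 x1 x2 x3 x4 x5 x6 x7) = (lam 1 * lam 2 * lam 3 * x7 * x7 + lam 1 * lam 2 * x6 * x6 + lam 1 * lam 3 * x5 * x5 + lam 1 * x4 * x4 + lam 2 * lam 3 * x3 * x3 + lam 2 * x2 * x2 + lam 3 * x1 * x1 + x0 * x0)"
  unfolding normN_def full_inv_mk bullet_mk
  by (simp add: scalar_part_def mk_def algebra_simps)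

lemma mult_mk: "normN lam (bullet lam (mk x0 x1 x2 x3 x4 x5 x6 x7) (mk y0 y1 y2 y3 y4 y5 y6 y7)) = normN lam (mk x0 x1 x2 x3 x4 x5 x6 x7) * normN lam (mk y0 y1 y2 y3 y4 y5 y6 y7)"
  unfolding bullet_mk normN_mk by algebra

lemma normN_mult: "normN lam (bullet lam x y) = normN lam x * normN lam y"
proof -
  obtain x0 x1 x2 x3 x4 x5 x6 x7 where x: "x = mk x0 x1 x2 x3 x4 x5 x6 x7" using mk_ex by blast
  obtain y0 y1 y2 y3 y4 y5 y6 y7 where y: "y = mk y0 y1 y2 y3 y4 y5 y6 y7" using mk_ex by blast
  show ?thesis unfolding x y by (rule mult_mk)
qed

lemma unit_l: "bullet lam mv_one x = x"
proof -
  obtain x0 x1 x2 x3 x4 x5 x6 x7 where x: "x = mk x0 x1 x2 x3 x4 x5 x6 x7" using mk_ex by blast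
  show ?thesis unfolding x one_mk bullet_mk mk_eq by simp
qed

lemma unit_r: "bullet lam x mv_one = x"
proof -
  obtain x0 x1 x2 x3 x4 x5 x6 x7 where x: "x = mk x0 x1 x2 x3 x4 x5 x6 x7" using mk_ex by blast
  show ?thesis unfolding x one_mk bullet_mk mk_eq by simp
qed

lemma conj_scalar: "bullet lam x (full_inv x) = normN lam x *\<^sub>R mv_one"
proof -
  obtain x0 x1 x2 x3 x4 x5 x6 x7 where x: "x = mk x0 x1 x2 x3 x4 x5 x6 x7" using mk_ex by blast
  show ?thesis unfolding x one_mk full_inv_mk bullet_mk normN_mk mk_scale mk_eq
    by (simp add: algebra_simps)
qed

lemma bilinear_bullet: "bilinear (bullet lam)"
  unfolding bilinear_def
proof (intro conjI allI)
  fix x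
  show "linear (bullet lam x)"
  proof (rule linearI)
    fix y z
    obtain x0 x1 x2 x3 x4 x5 x6 x7 where x: "x = mk x0 x1 x2 x3 x4 x5 x6 x7" using mk_ex by blast
    obtain y0 y1 y2 y3 y4 y5 y6 y7 where y: "y = mk y0 y1 y2 y3 y4 y5 y6 y7" using mk_ex by blast
    obtain z0 z1 z2 z3 z4 z5 z6 z7 where z: "z = mk z0 z1 z2 z3 z4 z5 z6 z7" using mk_ex by blast
    show "bullet lam x (y + z) = bullet lam x y + bullet lam x z"
      unfolding x y z mk_add bullet_mk mk_eq by (simp add: algebra_simps)
  next
    fix c y
    obtain x0 x1 x2 x3 x4 x5 x6 x7 where x: "x = mk x0 x1 x2 x3 x4 x5 x6 x7" using mk_ex by blast
    obtain y0 y1 y2 y3 y4 y5 y6 y7 where y: "y = mk y0 y1 y2 y3 y4 y5 y6 y7" using mk_ex by blast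
    show "bullet lam x (c *\<^sub>R y) = c *\<^sub>R bullet lam x y"
      unfolding x y mk_scale bullet_mk mk_eq by (simp add: algebra_simps)
  qed
next
  fix y
  show "linear (\<lambda>x. bullet lam x y)"
  proof (rule linearI)
    fix x z
    obtain x0 x1 x2 x3 x4 x5 x6 x7 where x: "x = mk x0 x1 x2 x3 x4 x5 x6 x7" using mk_ex by blast
    obtain y0 y1 y2 y3 y4 y5 y6 y7 where y: "y = mk y0 y1 y2 y3 y4 y5 y6 y7" using mk_ex by blast
    obtain z0 z1 z2 z3 z4 z5 z6 z7 where z: "z = mk z0 z1 z2 z3 z4 z5 z6 z7" using mk_ex by blast
    show "bullet lam (x + z) y = bullet lam x y + bullet lam z y"
      unfolding x y z mk_add bullet_mk mk_eq by (simp add: algebra_simps)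
  next
    fix c x
    obtain x0 x1 x2 x3 x4 x5 x6 x7 where x: "x = mk x0 x1 x2 x3 x4 x5 x6 x7" using mk_ex by blast
    obtain y0 y1 y2 y3 y4 y5 y6 y7 where y: "y = mk y0 y1 y2 y3 y4 y5 y6 y7" using mk_ex by blast
    show "bullet lam (c *\<^sub>R x) y = c *\<^sub>R bullet lam x y"
      unfolding x y mk_scale bullet_mk mk_eq by (simp add: algebra_simps)
  qed
qed

definition BF :: "(nat \<Rightarrow> real) \<Rightarrow> mv \<Rightarrow> mv \<Rightarrow> real" where
  "BF lam x y = (1) * x $ (False, False, False) * y $ (False, False, False) + (lam 3) * x $ (False, False, True) * y $ (False, False, True) + (lam 2) * x $ (False, True, False) * y $ (False, True, False) + (lam 2 * lam 3) * x $ (False, True, True) * y $ (False, True, True) + (lam 1) * x $ (True, False, False) * y $ (True, False, False) + (lam 1 * lam 3) * x $ (True, False, True) * y $ (True, False, True) + (lam 1 * lam 2) * x $ (True, True, False) * y $ (True, True, False) + (lam 1 * lam 2 * lam 3) * x $ (True, True, True) * y $ (True, True, True)"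

lemma nondeg:
  assumes "lam 1 \<noteq> 0" "lam 2 \<noteq> 0" "lam 3 \<noteq> 0"
  shows "nondeg_quadratic_form (normN lam)"
  unfolding nondeg_quadratic_form_def
proof (intro exI[of _ "BF lam"] conjI allI impI)
  show "bilinear (BF lam)"
    unfolding bilinear_def
    by (auto intro!: linearI simp: BF_def algebra_simps)
next
  fix x y show "BF lam x y = BF lam y x" by (simp add: BF_def algebra_simps)
next
  fix x
  obtain x0 x1 x2 x3 x4 x5 x6 x7 where x: "x = mk x0 x1 x2 x3 x4 x5 x6 x7" using mk_ex by blast
  show "normN lam x = BF lam x x" unfolding x normN_mk by (simp add: BF_def mk_def algebra_simps)
next
  fix x
  assume h: "\<forall>y. BF lam x y = 0"
  obtain x0 x1 x2 x3 x4 x5 x6 x7 where x: "x = mk x0 x1 x2 x3 x4 x5 x6 x7" using mk_ex by blast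
  have "BF lam x (mk 1 0 0 0 0 0 0 0) = 0" "BF lam x (mk 0 1 0 0 0 0 0 0) = 0"
    "BF lam x (mk 0 0 1 0 0 0 0 0) = 0" "BF lam x (mk 0 0 0 1 0 0 0 0) = 0"
    "BF lam x (mk 0 0 0 0 1 0 0 0) = 0" "BF lam x (mk 0 0 0 0 0 1 0 0) = 0"
    "BF lam x (mk 0 0 0 0 0 0 1 0) = 0" "BF lam x (mk 0 0 0 0 0 0 0 1) = 0"
    using h by auto
  then show "x = 0" unfolding x mk_zero mk_eq using assms
    by (simp add: BF_def mk_def)
qed

theorem theorem1:
  fixes p q :: nat and lam :: "nat \<Rightarrow> real"
  assumes "p + q = 3"
    and "\<forall>i\<in>{1,2,3::nat}. lam i = 1 \<or> lam i = -1"
    and "card {i\<in>{1,2,3::nat}. lam i = 1} = p"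
  shows "(\<forall>x. bullet lam mv_one x = x \<and> bullet lam x mv_one = x)
     \<and> (\<forall>x. bullet lam x (full_inv x) = normN lam x *\<^sub>R mv_one)
     \<and> nondeg_quadratic_form (normN lam)
     \<and> (\<forall>x y. normN lam (bullet lam x y) = normN lam x * normN lam y)
     \<and> hurwitz_algebra (bullet lam) mv_one (normN lam)"
proof -
  have l: "lam 1 \<noteq> 0" "lam 2 \<noteq> 0" "lam 3 \<noteq> 0" using assms(2) by auto
  have nd: "nondeg_quadratic_form (normN lam)" using nondeg[OF l] .
  show ?thesis
    using nd unit_l unit_r conj_scalar normN_mult bilinear_bullet
    unfolding hurwitz_algebra_def by blast
qed

end
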